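(* Let $\varphi\colon\mathbb{C}^*\times\mathbb{C}^n\to\mathbb{C}^n$ be a holomorphic action with a fixed point at $p$, let $\psi_p^z(x)=D\varphi^z(p)\cdot x$ be the action by linear transformations defined by the derivative of $\varphi$ at $p$, and let $F_p\colon\mathbb{C}^n\to\mathbb{C}^n$ be the holomorphic map $$F_p(x)=\int_0^1 D\phi^{-s}(p)\cdot\big[\phi^s(x)-p\big]\,ds,\qquad \phi^s:=\varphi\big(\exp(2\pi\sqrt{-1}s),\cdot\big).$$ (This map satisfies $\psi_p^z\circ F_p\equiv F_p\circ\varphi^z$ for all $z\in\mathbb{C}^*$, $F_p(p)=0$, $DF_p(p)=\mathrm{Id}$.) If $U\ni p$ and $V=F_p(U)$ are open sets in $\mathbb{C}^n$ such that (1) $F_p$ is injective on $U$, and (2) $\psi_p^z(V)\cap V$ is connected for each $z\in\mathbb{C}^*$, then $F_p$ is injective on the saturation $\mathrm{Sat}(U,\varphi)$ of $U$ by $\varphi$.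
   Context: A holomorphic action of $\mathbb{C}^*$ on $\mathbb{C}^n$ is a holomorphic map $\varphi\colon\mathbb{C}^*\times\mathbb{C}^n\to\mathbb{C}^n$ with $\varphi(1,x)=x$, $\varphi(zw,x)=\varphi(z,\varphi(w,x))$; $\varphi^z=\varphi(z,\cdot)$. The saturation $\mathrm{Sat}(U,\varphi)$ is the union of all $\varphi$-orbits meeting $U$. *)

theory Defs
  imports "HOL-Analysis.Analysis"
begin

text \<open>C^n is modelled as complex ^ 'n. A map on an open subset of C x C^n is holomorphic
  iff it is real-Frechet differentiable at each point with a complex-linear derivative.\<close>

definition holomorphic_action :: "(complex \<Rightarrow> complex ^ 'n \<Rightarrow> complex ^ 'n) \<Rightarrow> bool" where
  "holomorphic_action \<phi> \<longleftrightarrow>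
     (\<forall>z x. z \<noteq> 0 \<longrightarrow>
        (\<exists>L. ((\<lambda>(w, y). \<phi> w y) has_derivative L) (at (z, x)) \<and>
             (\<forall>c a v. L (c * a, c *s v) = c *s L (a, v)))) \<and>
     (\<forall>x. \<phi> 1 x = x) \<and>
     (\<forall>z w x. z \<noteq> 0 \<longrightarrow> w \<noteq> 0 \<longrightarrow> \<phi> (z * w) x = \<phi> z (\<phi> w x))"

definition orbit :: "(complex \<Rightarrow> 'a \<Rightarrow> 'a) \<Rightarrow> 'a \<Rightarrow> 'a set" where
  "orbit \<phi> x = {\<phi> z x | z. z \<noteq> 0}"

definition Sat :: "'a set \<Rightarrow> (complex \<Rightarrow> 'a \<Rightarrow> 'a) \<Rightarrow> 'a set" where
  "Sat U \<phi> = \<Union> {orbit \<phi> x | x. orbit \<phi> x \<inter> U \<noteq> {}}"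

definition lin_action :: "(complex \<Rightarrow> complex ^ 'n \<Rightarrow> complex ^ 'n) \<Rightarrow> complex ^ 'n
    \<Rightarrow> complex \<Rightarrow> complex ^ 'n \<Rightarrow> complex ^ 'n" where
  "lin_action \<phi> p z x = frechet_derivative (\<phi> z) (at p) x"

definition Fmap :: "(complex \<Rightarrow> complex ^ 'n \<Rightarrow> complex ^ 'n) \<Rightarrow> complex ^ 'n
    \<Rightarrow> complex ^ 'n \<Rightarrow> complex ^ 'n" where
  "Fmap \<phi> p x = integral {0..1::real}
     (\<lambda>s. lin_action \<phi> p (exp (- 2 * pi * \<i> * complex_of_real s))
            (\<phi> (exp (2 * pi * \<i> * complex_of_real s)) x - p))"

end

theory Submission
  imports Defs "HOL-Complex_Analysis.Complex_Analysis"
begin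

no_notation fps_nth (infixl \<open>$\<close> 75)





lemma smult_bl: "bounded_linear (\<lambda>u::complex. u *s (v::complex^'n))"
proof -
  have "linear (\<lambda>u::complex. u *s v)"
    by (rule linearI) (auto simp: vec_eq_iff vector_sadd_rdistrib)
  then show ?thesis by (simp add: linear_conv_bounded_linear)
qed

lemma smult_cont: "continuous_on T f \<Longrightarrow> continuous_on T (\<lambda>t. f t *s (v::complex^'n))"
  by (rule bounded_linear.continuous_on[OF smult_bl])

locale hact =
  fixes \<phi> :: "complex \<Rightarrow> complex ^ 'n \<Rightarrow> complex ^ 'n" and p :: "complex ^ 'n"
  assumes ha: "holomorphic_action \<phi>"
    and fixp: "\<And>z. z \<noteq> 0 \<Longrightarrow> \<phi> z p = p"
begin

lemma act1: "\<phi> 1 x = x" using ha unfolding holomorphic_action_def by blast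
lemma actmul: "z \<noteq> 0 \<Longrightarrow> w \<noteq> 0 \<Longrightarrow> \<phi> (z * w) x = \<phi> z (\<phi> w x)"
  using ha unfolding holomorphic_action_def by blast

lemma jointD:
  assumes "z \<noteq> 0"
  obtains L where "((\<lambda>(w, y). \<phi> w y) has_derivative L) (at (z, x))"
    "\<And>c a v. L (c * a, c *s v) = c *s L (a, v)"
  using ha assms unfolding holomorphic_action_def by blast

lemma joint_cont: "z \<noteq> 0 \<Longrightarrow> continuous (at (z, x)) (\<lambda>(w, y). \<phi> w y)"
  by (metis jointD has_derivative_continuous)

lemma cont_on: "continuous_on ((-{0}) \<times> UNIV) (\<lambda>(w, y). \<phi> w y)"
  by (rule continuous_at_imp_continuous_on) (auto intro: joint_cont)

lemma phi_cont_comp: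
  assumes "continuous_on T b" "continuous_on T a" "\<And>t. t \<in> T \<Longrightarrow> b t \<noteq> 0"
  shows "continuous_on T (\<lambda>t. \<phi> (b t) (a t))"
proof -
  have "continuous_on T ((\<lambda>(w, y). \<phi> w y) \<circ> (\<lambda>t. (b t, a t)))"
    by (rule continuous_on_compose, rule continuous_on_Pair[OF assms(1,2)],
        rule continuous_on_subset[OF cont_on]) (use assms(3) in auto)
  then show ?thesis by (simp add: o_def)
qed

lemma part_y:
  assumes "z \<noteq> 0"
  shows "(\<phi> z has_derivative frechet_derivative (\<phi> z) (at x)) (at x)"
    "\<And>c v. frechet_derivative (\<phi> z) (at x) (c *s v) = c *s frechet_derivative (\<phi> z) (at x) v"
proof -
  obtain L where L: "((\<lambda>(w, y). \<phi> w y) has_derivative L) (at (z, x))"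
    "\<And>c a v. L (c * a, c *s v) = c *s L (a, v)" using jointD[OF assms] by blast
  have "((\<lambda>y. (z, y)) has_derivative (\<lambda>v. (0, v))) (at x)"
    by (auto intro!: derivative_eq_intros)
  from diff_chain_at[OF this L(1)[unfolded o_def]]
  have d: "(\<phi> z has_derivative (\<lambda>v. L (0, v))) (at x)" by (simp add: o_def)
  have fe: "frechet_derivative (\<phi> z) (at x) = (\<lambda>v. L (0, v))"
    using d by (metis frechet_derivative_at)
  show "(\<phi> z has_derivative frechet_derivative (\<phi> z) (at x)) (at x)" using d fe by simp
  show "\<And>c v. frechet_derivative (\<phi> z) (at x) (c *s v) = c *s frechet_derivative (\<phi> z) (at x) v"
    using L(2)[of _ 0] by (simp add: fe)
qed

lemma part_w:
  assumes "z \<noteq> 0"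
  shows "\<exists>c. ((\<lambda>w. \<phi> w x $ i) has_field_derivative c) (at z)"
proof -
  obtain L where L: "((\<lambda>(w, y). \<phi> w y) has_derivative L) (at (z, x))"
    "\<And>c a v. L (c * a, c *s v) = c *s L (a, v)" using jointD[OF assms] by blast
  have "((\<lambda>w. (w, x)) has_derivative (\<lambda>a. (a, 0))) (at z)"
    by (auto intro!: derivative_eq_intros)
  from diff_chain_at[OF this L(1)[unfolded o_def]]
  have d: "((\<lambda>w. \<phi> w x) has_derivative (\<lambda>a. L (a, 0))) (at z)" by (simp add: o_def)
  have e: "L (a, 0) = a *s L (1, 0)" for a using L(2)[of a 1 0] by simp
  have "((\<lambda>w. \<phi> w x $ i) has_derivative (\<lambda>a. L (a, 0) $ i)) (at z)"
    using bounded_linear.has_derivative[OF bounded_linear_vec_nth d] by simp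
  moreover have "(\<lambda>a. L (a, 0) $ i) = (*) (L (1, 0) $ i)"
  proof
    fix a show "L (a, 0) $ i = L (1, 0) $ i * a" by (subst e) (simp add: mult.commute)
  qed
  ultimately have "((\<lambda>w. \<phi> w x $ i) has_field_derivative L (1, 0) $ i) (at z)"
    unfolding has_field_derivative_def by simp
  then show ?thesis by blast
qed

lemma open_nz: "open (-{0::complex})"
  using closed_singleton open_Compl by blast

lemma phi_w_holo: "(\<lambda>w. \<phi> w x $ i) holomorphic_on (-{0})"
  unfolding holomorphic_on_open[OF open_nz] using part_w by auto

abbreviation "psi \<equiv> lin_action \<phi> p"

lemma psi_eq: "psi z = frechet_derivative (\<phi> z) (at p)"
  by (simp add: lin_action_def fun_eq_iff)

lemma psi_deriv: "z \<noteq> 0 \<Longrightarrow> (\<phi> z has_derivative psi z) (at p)"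
  using part_y(1) psi_eq by simp

lemma psi_bl: "z \<noteq> 0 \<Longrightarrow> bounded_linear (psi z)"
  using psi_deriv has_derivative_bounded_linear by blast

lemma psi_hom: "z \<noteq> 0 \<Longrightarrow> psi z (c *s v) = c *s psi z v"
  using part_y(2) psi_eq by simp

lemma psi_mul: assumes "z \<noteq> 0" "w \<noteq> 0" shows "psi (z * w) v = psi z (psi w v)"
proof -
  have "(\<phi> z has_derivative psi z) (at (\<phi> w p))" using psi_deriv[OF assms(1)] fixp[OF assms(2)] by simp
  from diff_chain_at[OF psi_deriv[OF assms(2)] this]
  have c1: "(\<phi> z \<circ> \<phi> w has_derivative psi z \<circ> psi w) (at p)" .
  have e: "\<phi> z \<circ> \<phi> w = \<phi> (z * w)" using actmul assms by (auto simp: fun_eq_iff)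
  have c2: "(\<phi> (z*w) has_derivative psi z \<circ> psi w) (at p)" using c1 unfolding e .
  have c3: "(\<phi> (z*w) has_derivative psi (z*w)) (at p)" using psi_deriv assms by simp
  have "psi (z*w) = psi z \<circ> psi w" by (rule has_derivative_unique[OF c3 c2])
  then show ?thesis by simp
qed

lemma psi_one: "psi 1 v = v"
proof -
  have e: "\<phi> 1 = id" using act1 by (auto simp: fun_eq_iff)
  have "(\<phi> 1 has_derivative id) (at p)" unfolding e by (rule has_derivative_id)
  from has_derivative_unique[OF psi_deriv[of 1] this] have "psi 1 = id" by simp
  then show ?thesis by simp
qed

lemma psi_inv1: "z \<noteq> 0 \<Longrightarrow> psi (inverse z) (psi z v) = v"
  using psi_mul[of "inverse z" z v] psi_one by simp
lemma psi_inv2: "z \<noteq> 0 \<Longrightarrow> psi z (psi (inverse z) v) = v"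
  using psi_mul[of z "inverse z" v] psi_one by simp

lemma psi_zero: "z \<noteq> 0 \<Longrightarrow> psi z 0 = 0"
  by (rule linear_0[OF bounded_linear.linear[OF psi_bl]])

lemma g_deriv:
  assumes "w \<noteq> 0"
  shows "((\<lambda>u. \<phi> w (p + u *s v) $ i) has_field_derivative
           (frechet_derivative (\<phi> w) (at (p + u *s v)) v $ i)) (at u)"
proof -
  have d1: "((\<lambda>u. p + u *s v) has_derivative (\<lambda>k. k *s v)) (at u)"
    using has_derivative_add[OF has_derivative_const bounded_linear_imp_has_derivative[OF smult_bl]]
    by simp
  from diff_chain_at[OF d1 part_y(1)[OF assms, of "p + u *s v"]]
  have "((\<lambda>u. \<phi> w (p + u *s v)) has_derivative
          (\<lambda>k. frechet_derivative (\<phi> w) (at (p + u *s v)) (k *s v))) (at u)"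
    by (simp add: o_def)
  from bounded_linear.has_derivative[OF bounded_linear_vec_nth this, of i]
  have "((\<lambda>u. \<phi> w (p + u *s v) $ i) has_derivative
          (\<lambda>k. k * (frechet_derivative (\<phi> w) (at (p + u *s v)) v $ i))) (at u)"
    by (simp add: part_y(2)[OF assms])
  moreover have "(\<lambda>k. k * (frechet_derivative (\<phi> w) (at (p + u *s v)) v $ i)) =
     (*) (frechet_derivative (\<phi> w) (at (p + u *s v)) v $ i)" by (rule ext) (simp add: mult.commute)
  ultimately show ?thesis unfolding has_field_derivative_def by simp
qed

lemma Q_eq:
  assumes "w \<noteq> 0"
  shows "((\<lambda>u. \<phi> w (p + u *s v) $ i / u^2) has_contour_integral (2*pi*\<i> * (psi w v $ i)))
           (circlepath 0 1)"
proof -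
  define g where "g = (\<lambda>u. \<phi> w (p + u *s v) $ i)"
  have hol: "g holomorphic_on UNIV"
    unfolding holomorphic_on_open[OF open_UNIV] g_def using g_deriv[OF assms] by blast
  have dg: "deriv g 0 = psi w v $ i"
    using g_deriv[OF assms, of v i 0] by (simp add: g_def DERIV_imp_deriv psi_eq)
  have "((\<lambda>u. g u / (u - 0) ^ Suc 1) has_contour_integral ((2 * pi * \<i>) / (fact 1) * (deriv ^^ 1) g 0))
           (circlepath 0 1)"
    by (rule Cauchy_has_contour_integral_higher_derivative_circlepath)
       (use hol in \<open>auto intro: holomorphic_on_imp_continuous_on holomorphic_on_subset\<close>)
  then show ?thesis using dg unfolding g_def by (simp add: power2_eq_square)
qed

end





lemma cint_param_cont:
  fixes K :: "'a::topological_space \<Rightarrow> complex \<Rightarrow> complex" and \<gamma> :: "real \<Rightarrow> complex"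
  assumes K: "continuous_on (S \<times> path_image \<gamma>) (\<lambda>(w,u). K w u)"
    and g: "continuous_on {0..1} \<gamma>"
    and vd: "continuous_on {0..1} (\<lambda>t. vector_derivative \<gamma> (at t))"
  shows "continuous_on S (\<lambda>w. contour_integral \<gamma> (K w))"
proof -
  have c1: "continuous_on (S \<times> {0..1}) (\<lambda>x. (fst x, \<gamma> (snd x)))"
    by (intro continuous_on_Pair continuous_on_fst continuous_on_id
          continuous_on_compose2[OF g continuous_on_snd]) auto
  have c2: "continuous_on (S \<times> {0..1}) (\<lambda>x. (\<lambda>(w,u). K w u) (fst x, \<gamma> (snd x)))"
    by (rule continuous_on_compose2[OF K c1]) (auto simp: path_image_def)
  have c3: "continuous_on (S \<times> {0..1}) (\<lambda>x. vector_derivative \<gamma> (at (snd x)))"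
    by (rule continuous_on_compose2[OF vd continuous_on_snd]) auto
  have "continuous_on (S \<times> cbox 0 1) (\<lambda>(w, t). K w (\<gamma> t) * vector_derivative \<gamma> (at t))"
    using continuous_on_mult[OF c2 c3] by (simp add: case_prod_beta cbox_interval)
  from integral_continuous_on_param[OF this]
  show ?thesis by (simp add: contour_integral_integral cbox_interval)
qed

context hact begin

lemma psi_holo: "(\<lambda>w. psi w v $ i) holomorphic_on (-{0})"
proof -
  define f where "f = (\<lambda>w u. \<phi> w (p + u *s v) $ i / u^2)"
  define Q where "Q = (\<lambda>w. contour_integral (circlepath 0 1) (f w))"
  have fcont: "continuous_on ((-{0}) \<times> (-{0})) (\<lambda>(w,u). f w u)"
  proof -
    have "continuous_on ((-{0}) \<times> (-{0})) (\<lambda>x. \<phi> (fst x) (p + snd x *s v))"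
      by (rule phi_cont_comp) (auto intro!: continuous_intros smult_cont)
    then have "continuous_on ((-{0}) \<times> (-{0})) (\<lambda>x. \<phi> (fst x) (p + snd x *s v) $ i / (snd x)^2)"
      by (auto intro!: continuous_intros bounded_linear.continuous_on[OF bounded_linear_vec_nth])
    then show ?thesis by (simp add: f_def case_prod_beta)
  qed
  have holw: "(\<lambda>w. f w u) holomorphic_on (-{0})" for u
  proof -
    have "(\<lambda>w. \<phi> w (p + u *s v) $ i * inverse (u^2)) holomorphic_on -{0}"
      by (intro holomorphic_on_mult phi_w_holo holomorphic_on_const)
    then show ?thesis by (simp add: f_def divide_inverse)
  qed
  have Qeq: "Q w = 2*pi*\<i> * (psi w v $ i)" if "w \<noteq> 0" for w
    using Q_eq[OF that] contour_integral_unique by (simp add: Q_def f_def)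
  have sph: "path_image (circlepath 0 1) = sphere (0::complex) 1"
    by (simp add: path_image_circlepath_nonneg)
  have sph0: "sphere (0::complex) 1 \<subseteq> -{0}" by auto
  have vdc: "continuous_on {0..1} (\<lambda>t. vector_derivative (circlepath 0 1) (at t))"
    by (simp add: vector_derivative_circlepath) (intro continuous_intros)
  have ccirc: "continuous_on {0..1} (circlepath 0 1)"
    using path_circlepath path_def by blast
  have Qcont: "continuous_on (-{0}) Q"
    unfolding Q_def
    by (rule cint_param_cont[OF _ ccirc vdc])
       (rule continuous_on_subset[OF fcont], use sph sph0 in auto)
  have seg: "contour_integral (linepath a b) Q =
               contour_integral (circlepath 0 1) (\<lambda>u. contour_integral (linepath a b) (\<lambda>w. f w u))
           \<and> (\<lambda>u. contour_integral (linepath a b) (\<lambda>w. f w u)) contour_integrable_on (circlepath 0 1)"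
    if ab: "closed_segment a b \<subseteq> -{0}" for a b
  proof
    show "contour_integral (linepath a b) Q =
               contour_integral (circlepath 0 1) (\<lambda>u. contour_integral (linepath a b) (\<lambda>w. f w u))"
      unfolding Q_def
    proof (rule contour_integral_swap)
      show "continuous_on (path_image (linepath a b) \<times> path_image (circlepath 0 1)) (\<lambda>(y1, y2). f y1 y2)"
        by (rule continuous_on_subset[OF fcont]) (use ab sph sph0 in auto)
      show "continuous_on {0..1} (\<lambda>t. vector_derivative (linepath a b) (at t))"
        by simp
    qed (use vdc in auto)
    have "continuous_on (sphere 0 1) (\<lambda>u. contour_integral (linepath a b) (\<lambda>w. f w u))"
    proof (rule cint_param_cont)
      have "continuous_on ((-{0}) \<times> (-{0})) (\<lambda>(x, y). f y x)"
        using continuous_on_swap_args[OF fcont] by simp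
      then show "continuous_on (sphere 0 1 \<times> path_image (linepath a b)) (\<lambda>(u, w). f w u)"
        by (rule continuous_on_subset) (use ab sph0 in auto)
    qed (auto intro: continuous_intros)
    then show "(\<lambda>u. contour_integral (linepath a b) (\<lambda>w. f w u)) contour_integrable_on (circlepath 0 1)"
      by (intro contour_integrable_continuous_circlepath) (simp add: sph)
  qed
  have tri: "contour_integral (linepath a b) Q + contour_integral (linepath b c) Q +
             contour_integral (linepath c a) Q = 0"
    if H: "convex hull {a,b,c} \<subseteq> -{0}" for a b c
  proof -
    have s1: "closed_segment a b \<subseteq> -{0}" using H by (metis segment_convex_hull hull_mono insert_mono subset_insertI order_trans)
    have s2: "closed_segment b c \<subseteq> -{0}" using H
      by (metis segment_convex_hull hull_mono insert_commute insert_mono subset_insertI order_trans)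
    have s3: "closed_segment c a \<subseteq> -{0}"
    proof -
      have "{c, a} \<subseteq> {a, b, c}" by auto
      then show ?thesis using H by (metis segment_convex_hull hull_mono order_trans)
    qed
    define A where "A = (\<lambda>x y u. contour_integral (linepath x y) (\<lambda>w. f w u))"
    note e1 = seg[OF s1] and e2 = seg[OF s2] and e3 = seg[OF s3]
    have z: "A a b u + A b c u + A c a u = 0" if "u \<in> path_image (circlepath 0 1)" for u
    proof -
      have "(\<lambda>w. f w u) holomorphic_on convex hull {a,b,c}"
        using holomorphic_on_subset[OF holw H] .
      from has_chain_integral_chain_integral3[OF Cauchy_theorem_triangle[OF this]]
      show ?thesis by (simp add: A_def)
    qed
    have "contour_integral (linepath a b) Q + contour_integral (linepath b c) Q +
             contour_integral (linepath c a) Q =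
          contour_integral (circlepath 0 1) (A a b) + contour_integral (circlepath 0 1) (A b c) +
          contour_integral (circlepath 0 1) (A c a)"
      using e1 e2 e3 by (simp add: A_def)
    also have "\<dots> = contour_integral (circlepath 0 1) (\<lambda>u. A a b u + A b c u + A c a u)"
    proof -
      have i1: "A a b contour_integrable_on circlepath 0 1" using e1 by (simp add: A_def)
      have i2: "A b c contour_integrable_on circlepath 0 1" using e2 by (simp add: A_def)
      have i3: "A c a contour_integrable_on circlepath 0 1" using e3 by (simp add: A_def)
      show ?thesis
        by (subst contour_integral_add[OF contour_integrable_add[OF i1 i2] i3],
            subst contour_integral_add[OF i1 i2]) simp
    qed
    also have "\<dots> = contour_integral (circlepath 0 1) (\<lambda>u. 0)"
      by (rule contour_integral_eq) (use z in auto)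
    finally show ?thesis by simp
  qed
  have "Q analytic_on (-{0})"
    by (rule Morera_triangle[OF Qcont open_nz]) (use tri in blast)
  then have "(\<lambda>w. Q w / (2*pi*\<i>)) holomorphic_on (-{0})"
    by (intro holomorphic_intros analytic_imp_holomorphic) auto
  then show ?thesis
    by (rule holomorphic_transform) (simp add: Qeq)
qed

end





lemma smult2_cont:
  fixes f :: "'a::topological_space \<Rightarrow> complex" and g :: "'a \<Rightarrow> complex^'n"
  assumes "continuous_on T f" "continuous_on T g"
  shows "continuous_on T (\<lambda>t. f t *s g t)"
proof -
  have "continuous_on T (\<lambda>t. \<chi> k. f t * g t $ k)"
    by (intro continuous_on_vec_lambda continuous_on_mult assms
          bounded_linear.continuous_on[OF bounded_linear_vec_nth])
  moreover have "(\<lambda>t. \<chi> k. f t * g t $ k) = (\<lambda>t. f t *s g t)" by (auto simp: vec_eq_iff)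
  ultimately show ?thesis by metis
qed

context hact begin

lemma psi_expand:
  assumes w: "w \<noteq> 0"
  shows "psi w u = (\<Sum>j\<in>UNIV. (u $ j) *s psi w (axis j 1))"
proof -
  have "psi w u = psi w (\<Sum>j\<in>UNIV. (u $ j) *s axis j 1)" by (simp add: basis_expansion)
  also have "\<dots> = (\<Sum>j\<in>UNIV. psi w ((u $ j) *s axis j 1))"
    by (rule linear_sum[OF bounded_linear.linear[OF psi_bl[OF w]]])
  also have "\<dots> = (\<Sum>j\<in>UNIV. (u $ j) *s psi w (axis j 1))" by (simp add: psi_hom[OF w])
  finally show ?thesis .
qed

lemma psi_cont: "continuous_on (-{0}) (\<lambda>w. psi w a)"
proof -
  have "continuous_on (-{0}) (\<lambda>w. \<chi> k. psi w a $ k)"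
    by (intro continuous_on_vec_lambda holomorphic_on_imp_continuous_on psi_holo)
  then show ?thesis by simp
qed

lemma psi_cont_comp:
  assumes b: "continuous_on T b" and a: "continuous_on T a" and nz: "\<And>t. t \<in> T \<Longrightarrow> b t \<noteq> 0"
  shows "continuous_on T (\<lambda>t. psi (b t) (a t))"
proof -
  have "continuous_on T (\<lambda>t. \<Sum>j\<in>UNIV. (a t $ j) *s psi (b t) (axis j 1))"
  proof (intro continuous_on_sum smult2_cont)
    fix j
    show "continuous_on T (\<lambda>t. a t $ j)"
      by (rule bounded_linear.continuous_on[OF bounded_linear_vec_nth a])
    show "continuous_on T (\<lambda>t. psi (b t) (axis j 1))"
      by (rule continuous_on_compose2[OF psi_cont b]) (use nz in auto)
  qed
  moreover have "t \<in> T \<Longrightarrow> (\<Sum>j\<in>UNIV. (a t $ j) *s psi (b t) (axis j 1)) = psi (b t) (a t)" for t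
    using psi_expand[OF nz] by simp
  ultimately show ?thesis using continuous_on_cong by force
qed

lemma psi_holo_comp:
  assumes b: "b holomorphic_on S" and a: "\<And>j. (\<lambda>w. a w $ j) holomorphic_on S"
    and nz: "\<And>t. t \<in> S \<Longrightarrow> b t \<noteq> 0"
  shows "(\<lambda>w. psi (b w) (a w) $ i) holomorphic_on S"
proof -
  have "(\<lambda>w. \<Sum>j\<in>UNIV. a w $ j * psi (b w) (axis j 1) $ i) holomorphic_on S"
  proof (intro holomorphic_on_sum holomorphic_on_mult a)
    fix j
    have "((\<lambda>w. psi w (axis j 1) $ i) \<circ> b) holomorphic_on S"
      by (rule holomorphic_on_compose_gen[OF b psi_holo]) (use nz in auto)
    then show "(\<lambda>w. psi (b w) (axis j 1) $ i) holomorphic_on S" by (simp add: o_def)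
  qed
  then show ?thesis
  proof (rule holomorphic_transform)
    fix w assume "w \<in> S"
    then show "(\<Sum>j\<in>UNIV. a w $ j * psi (b w) (axis j 1) $ i) = psi (b w) (a w) $ i"
      using psi_expand[OF nz[of w], of "a w"] by (simp add: sum_component)
  qed
qed

abbreviation "F \<equiv> Fmap \<phi> p"

lemma F_alt: "F x = integral {0..1}
     (\<lambda>s. psi (inverse (exp (2 * pi * \<i> * complex_of_real s))) (\<phi> (exp (2 * pi * \<i> * complex_of_real s)) x - p))"
proof -
  have "exp (- 2 * pi * \<i> * complex_of_real s) = inverse (exp (2 * pi * \<i> * complex_of_real s))" for s
    by (simp add: exp_minus[symmetric])
  then show ?thesis unfolding Fmap_def by simp
qed

lemma integrand_cont:
  "continuous_on (UNIV \<times> {0..1})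
     (\<lambda>y. psi (inverse (exp (2 * pi * \<i> * complex_of_real (snd y))))
        (\<phi> (exp (2 * pi * \<i> * complex_of_real (snd y))) (fst y) - p))"
  by (intro psi_cont_comp phi_cont_comp continuous_intros) auto

lemma F_cont: "continuous_on UNIV F"
proof -
  have "continuous_on (UNIV \<times> cbox 0 1)
     (\<lambda>(x, s). psi (inverse (exp (2 * pi * \<i> * complex_of_real s))) (\<phi> (exp (2 * pi * \<i> * complex_of_real s)) x - p))"
    using integrand_cont by (simp add: case_prod_beta cbox_interval)
  from integral_continuous_on_param[OF this]
  show ?thesis by (simp add: F_alt[abs_def] cbox_interval)
qed

lemma F_p: "F p = 0"
  unfolding F_alt by (simp add: fixp psi_zero)

end





context hact begin

lemma loop_eq:
  assumes fh: "f holomorphic_on (-{0})" and z: "z \<noteq> 0"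
  shows "integral {0..1} (\<lambda>t. f (z * exp (2 * pi * \<i> * complex_of_real t)))
       = integral {0..1} (\<lambda>t. f (exp (2 * pi * \<i> * complex_of_real t)))"
proof -
  define g where "g = (\<lambda>w. f w / w)"
  have gh: "g holomorphic_on (-{0})" unfolding g_def by (intro holomorphic_intros fh) auto
  define \<gamma> where "\<gamma> = (*) z \<circ> circlepath 0 1"
  have \<gamma>t: "\<gamma> t = z * exp (2 * pi * \<i> * complex_of_real t)" for t
    by (simp add: \<gamma>_def circlepath)
  have vp: "valid_path \<gamma>" unfolding \<gamma>_def
    by (rule valid_path_compose_holomorphic[where S=UNIV]) (auto intro: holomorphic_intros)
  have vd: "vector_derivative \<gamma> (at t) = z * (2 * pi * \<i> * exp (2 * pi * \<i> * complex_of_real t))" for t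
  proof -
    note d = has_vector_derivative_circlepath[of 0 1 t UNIV]
    from has_vector_derivative_mult_right[OF d, of z]
    have "(\<gamma> has_vector_derivative z * (2 * pi * \<i> * exp (2 * pi * \<i> * complex_of_real t))) (at t)"
      by (simp add: \<gamma>_def o_def)
    then show ?thesis using vector_derivative_at by fastforce
  qed
  have hom: "homotopic_loops (-{0}) \<gamma> (circlepath 0 1)"
    unfolding homotopic_loops
  proof (intro exI conjI)
    let ?h = "\<lambda>y::real\<times>real. exp ((1 - of_real (fst y)) * Ln z) * exp (2 * of_real pi * \<i> * of_real (snd y))"
    show "continuous_on ({0..1} \<times> {0..1}) ?h" by (intro continuous_intros)
    show "?h \<in> {0..1} \<times> {0..1} \<rightarrow> -{0}" by auto
    show "\<forall>x\<in>{0..1}. ?h (0, x) = \<gamma> x" using z by (simp add: \<gamma>t)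
    show "\<forall>x\<in>{0..1}. ?h (1, x) = circlepath 0 1 x" by (simp add: circlepath)
    show "\<forall>t\<in>{0..1}. pathfinish (?h \<circ> Pair t) = pathstart (?h \<circ> Pair t)"
      by (simp add: pathfinish_def pathstart_def)
  qed
  have ci: "contour_integral \<gamma> g = contour_integral (circlepath 0 1) g"
    by (rule Cauchy_theorem_homotopic_loops[OF hom open_nz gh vp valid_path_circlepath])
  have e1: "contour_integral \<gamma> g = integral {0..1} (\<lambda>t. (2 * pi * \<i>) * f (z * exp (2 * pi * \<i> * complex_of_real t)))"
    unfolding contour_integral_integral using z
    by (intro integral_cong) (simp add: \<gamma>t vd g_def field_simps)
  have e2: "contour_integral (circlepath 0 1) g = integral {0..1} (\<lambda>t. (2 * pi * \<i>) * f (exp (2 * pi * \<i> * complex_of_real t)))"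
    unfolding contour_integral_integral
    by (intro integral_cong) (simp only: vector_derivative_circlepath, simp add: circlepath g_def field_simps)
  show ?thesis using ci unfolding e1 e2 by simp
qed

end





context hact begin

lemma E_cont:
  assumes "continuous_on T b" "\<And>t. t \<in> T \<Longrightarrow> b t \<noteq> 0"
  shows "continuous_on T (\<lambda>t. psi (inverse (b t)) (\<phi> (b t) x - p))"
  by (intro psi_cont_comp phi_cont_comp continuous_intros assms) (use assms(2) in auto)

lemma vec_integral_nth:
  fixes f :: "real \<Rightarrow> complex^'m"
  assumes "f integrable_on S"
  shows "integral S f $ i = integral S (\<lambda>t. f t $ i)"
  using integral_linear[OF assms bounded_linear_vec_nth, of i] by (simp add: o_def)

lemma F_equiv:
  assumes z: "z \<noteq> 0"
  shows "F (\<phi> z x) = psi z (F x)"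
proof -
  define e where "e = (\<lambda>t::real. exp (2 * pi * \<i> * complex_of_real t))"
  have enz: "e t \<noteq> 0" for t by (simp add: e_def)
  have econt: "continuous_on S e" for S unfolding e_def by (intro continuous_intros)
  define E where "E = (\<lambda>w. psi (inverse w) (\<phi> w x - p))"
  have intg: "(\<lambda>s. psi (inverse (e s)) (\<phi> (e s) y - p)) integrable_on {0..1}" for y
    by (intro integrable_continuous_interval E_cont econt enz)
  have intg2: "(\<lambda>t. E (c * e t)) integrable_on {0..1}" if "c \<noteq> 0" for c
    unfolding E_def by (intro integrable_continuous_interval E_cont continuous_intros econt)
       (use that enz in auto)
  have Fa: "F y = integral {0..1} (\<lambda>s. psi (inverse (e s)) (\<phi> (e s) y - p))" for y
    unfolding F_alt e_def ..
  have s1: "psi (inverse z) (F (\<phi> z x)) = integral {0..1} (\<lambda>t. E (z * e t))"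
  proof -
    have "psi (inverse z) (F (\<phi> z x)) =
          integral {0..1} (psi (inverse z) \<circ> (\<lambda>s. psi (inverse (e s)) (\<phi> (e s) (\<phi> z x) - p)))"
      unfolding Fa by (rule integral_linear[symmetric, OF intg psi_bl]) (use z in simp)
    also have "\<dots> = integral {0..1} (\<lambda>t. E (z * e t))"
    proof (rule integral_cong)
      fix t
      have "psi (inverse z) (psi (inverse (e t)) (\<phi> (e t) (\<phi> z x) - p)) =
            psi (inverse z * inverse (e t)) (\<phi> (e t) (\<phi> z x) - p)"
        using psi_mul[of "inverse z" "inverse (e t)"] z enz by simp
      also have "\<dots> = E (z * e t)"
        unfolding E_def using actmul[of "e t" z x] z enz by (simp add: mult.commute)
      finally show "(psi (inverse z) \<circ> (\<lambda>s. psi (inverse (e s)) (\<phi> (e s) (\<phi> z x) - p))) t = E (z * e t)"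
        by simp
    qed
    finally show ?thesis .
  qed
  have s2: "integral {0..1} (\<lambda>t. E (z * e t)) = integral {0..1} (\<lambda>t. E (1 * e t))"
  proof (subst vec_eq_iff, intro allI)
    fix i
    have hol: "(\<lambda>w. E w $ i) holomorphic_on (-{0})"
      unfolding E_def
    proof (rule psi_holo_comp)
      show "inverse holomorphic_on (-{0::complex})" by (intro holomorphic_intros) auto
      fix j show "(\<lambda>w. (\<phi> w x - p) $ j) holomorphic_on (-{0})"
        by (simp, intro holomorphic_intros phi_w_holo)
    qed auto
    have "integral {0..1} (\<lambda>t. E (z * e t)) $ i = integral {0..1} (\<lambda>t. E (z * e t) $ i)"
      by (rule vec_integral_nth[OF intg2[OF z]])
    also have "\<dots> = integral {0..1} (\<lambda>t. E (e t) $ i)"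
      using loop_eq[OF hol z] unfolding e_def .
    also have "\<dots> = integral {0..1} (\<lambda>t. E (1 * e t)) $ i"
      using vec_integral_nth[OF intg2[of 1]] by simp
    finally show "integral {0..1} (\<lambda>t. E (z * e t)) $ i = integral {0..1} (\<lambda>t. E (1 * e t)) $ i" .
  qed
  have s3: "integral {0..1} (\<lambda>t. E (1 * e t)) = F x"
    unfolding Fa E_def by simp
  have "psi (inverse z) (F (\<phi> z x)) = F x" using s1 s2 s3 by simp
  then have "psi z (psi (inverse z) (F (\<phi> z x))) = psi z (F x)" by simp
  then show ?thesis using psi_inv2[OF z] by simp
qed

end





context hact begin

lemma sat_rep:
  assumes "x \<in> Sat U \<phi>"
  obtains z u where "z \<noteq> 0" "u \<in> U" "x = \<phi> z u"
proof -
  from assms obtain x0 where x: "x \<in> orbit \<phi> x0" and ne: "orbit \<phi> x0 \<inter> U \<noteq> {}"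
    unfolding Sat_def by blast
  from x obtain a where a: "a \<noteq> 0" "x = \<phi> a x0" unfolding orbit_def by blast
  from ne obtain b where b: "b \<noteq> 0" "\<phi> b x0 \<in> U" unfolding orbit_def by blast
  have "\<phi> (a / b) (\<phi> b x0) = \<phi> (a / b * b) x0" using actmul[of "a/b" b x0] a b by simp
  also have "\<dots> = x" using a b by simp
  finally show ?thesis using that[of "a/b" "\<phi> b x0"] a b by simp
qed

lemma key:
  assumes U: "open U" "p \<in> U" and V: "V = F ` U" and inj: "inj_on F U"
    and conn: "connected (psi w ` V \<inter> V)" and w: "w \<noteq> 0"
    and u: "u1 \<in> U" "u2 \<in> U" and eq: "F u1 = psi w (F u2)"
  shows "u1 = \<phi> w u2"
proof -
  obtain G where hom: "homeomorphism U V F G"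
    using invariance_of_domain_homeomorphism[OF U(1) continuous_on_subset[OF F_cont] _ inj] V by blast
  have GF: "\<And>x. x \<in> U \<Longrightarrow> G (F x) = x" and FG: "\<And>y. y \<in> V \<Longrightarrow> F (G y) = y"
    and GV: "G ` V = U" and Gc: "continuous_on V G"
    using hom unfolding homeomorphism_def by auto
  define W where "W = psi w ` V \<inter> V"
  define H where "H = (\<lambda>v. \<phi> w (G (psi (inverse w) v)))"
  have inv: "psi (inverse w) v \<in> V" if "v \<in> W" for v
    using that psi_inv1[OF w] unfolding W_def by auto
  have pc: "continuous_on W (psi (inverse w))"
    using bounded_linear.continuous_on[OF psi_bl continuous_on_id, of "inverse w" W] w by simp
  have Hc: "continuous_on W H"
    unfolding H_def
    by (rule phi_cont_comp[where b="\<lambda>_. w", OF continuous_on_const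
          continuous_on_compose2[OF Gc pc]]) (use inv w in auto)
  have GcW: "continuous_on W G" using Gc W_def continuous_on_subset by blast
  define S where "S = {v \<in> W. G v - H v = 0}"
  have cl: "closedin (top_of_set W) S"
    unfolding S_def by (rule continuous_closedin_preimage_constant) (intro continuous_intros GcW Hc)
  have S_alt: "S = W \<inter> H -` U"
  proof (intro set_eqI iffI)
    fix v assume "v \<in> S"
    then have vW: "v \<in> W" and GH: "G v = H v" unfolding S_def by auto
    have "G v \<in> U" using GV vW W_def by auto
    then show "v \<in> W \<inter> H -` U" using vW GH by simp
  next
    fix v assume v: "v \<in> W \<inter> H -` U"
    then have vW: "v \<in> W" and HU: "H v \<in> U" by auto
    have "F (H v) = psi w (F (G (psi (inverse w) v)))" unfolding H_def using F_equiv[OF w] by simp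
    also have "\<dots> = v" using FG[OF inv[OF vW]] psi_inv2[OF w] by simp
    finally have "F (H v) = F (G v)" using FG vW W_def by auto
    moreover have "G v \<in> U" using GV vW W_def by auto
    ultimately have "H v = G v" using inj HU unfolding inj_on_def by blast
    then show "v \<in> S" unfolding S_def using vW by simp
  qed
  have op: "openin (top_of_set W) S"
    unfolding S_alt by (rule continuous_openin_preimage_gen[OF Hc U(1)])
  have F0: "F p = 0" by (rule F_p)
  have zV: "0 \<in> V" using F0 U V by force
  have zW: "0 \<in> W" unfolding W_def using zV psi_zero[OF w] by force
  have G0: "G 0 = p" using GF[OF U(2)] F0 by simp
  have zS: "0 \<in> S" unfolding S_def H_def using zW G0 psi_zero[of "inverse w"] w fixp[OF w] by simp
  have "S = W" using conn op cl zS unfolding connected_clopen W_def by blast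
  moreover have v0: "F u1 \<in> W"
  proof -
    have a: "F u1 \<in> V" using u V by auto
    have b: "F u1 \<in> psi w ` V" unfolding eq using u V by auto
    show ?thesis using a b unfolding W_def by blast
  qed
  ultimately have "G (F u1) = H (F u1)" unfolding S_def by auto
  then have "u1 = H (F u1)" using GF u by simp
  also have "H (F u1) = \<phi> w u2" unfolding H_def eq using psi_inv1[OF w] GF u by simp
  finally show ?thesis .
qed

end

theorem lemma2:
  fixes \<phi> :: "complex \<Rightarrow> complex ^ 'n \<Rightarrow> complex ^ 'n"
    and p :: "complex ^ 'n" and U V :: "(complex ^ 'n) set"
  assumes "holomorphic_action \<phi>"
    and "\<forall>z. z \<noteq> 0 \<longrightarrow> \<phi> z p = p"
    and "open U" and "p \<in> U"
    and "V = Fmap \<phi> p ` U" and "open V"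
    and "inj_on (Fmap \<phi> p) U"
    and "\<forall>z. z \<noteq> 0 \<longrightarrow> connected (lin_action \<phi> p z ` V \<inter> V)"
  shows "inj_on (Fmap \<phi> p) (Sat U \<phi>)"
proof -
  interpret hact \<phi> p using assms(1,2) by unfold_locales auto
  show ?thesis
  proof (rule inj_onI)
    fix x y assume x: "x \<in> Sat U \<phi>" and y: "y \<in> Sat U \<phi>" and Fxy: "F x = F y"
    obtain z1 u1 where z1: "z1 \<noteq> 0" "u1 \<in> U" "x = \<phi> z1 u1" using sat_rep[OF x] by blast
    obtain z2 u2 where z2: "z2 \<noteq> 0" "u2 \<in> U" "y = \<phi> z2 u2" using sat_rep[OF y] by blast
    define w where "w = inverse z1 * z2"
    have w: "w \<noteq> 0" using z1 z2 by (simp add: w_def)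
    have "psi z1 (F u1) = psi z2 (F u2)" using Fxy z1 z2 F_equiv by simp
    then have "psi (inverse z1) (psi z1 (F u1)) = psi (inverse z1) (psi z2 (F u2))" by simp
    then have "F u1 = psi w (F u2)"
      using psi_inv1[OF z1(1)] psi_mul[of "inverse z1" z2] z1 z2 by (simp add: w_def)
    then have "u1 = \<phi> w u2"
      by (intro key[OF assms(3,4,5,7)]) (use assms(8) w z1 z2 in auto)
    then have "x = \<phi> (z1 * w) u2" using z1 actmul w by simp
    also have "z1 * w = z2" using z1 by (simp add: w_def)
    finally show "x = y" using z2 by simp
  qed
qed



end
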